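(* Let $\varphi=\nu\tilde n.\sigma$ be a frame well-formed with respect to $\mathtt{s}\in\tilde n$ and let $q_{\mathtt{s}}$ be an occurrence (position) of $\mathtt{s}$ in $y\sigma$ for some $y\in\mathrm{dom}(\sigma)$. If $\varphi\nvdash\mathtt{s}$ then there exists a position $q<q_{\mathtt{s}}$ (strict prefix) such that the head symbol of $y\sigma|_q$ is $\mathsf{enc}$ or $\mathsf{enca}$ and $q\cdot1\le q_{\mathtt{s}}$.
   Context: Terms over $\Sigma=\{\mathsf{enc}/3,\mathsf{dec}/2,\mathsf{enca}/3,\mathsf{deca}/2,\mathsf{pub}/1,\mathsf{priv}/1,\langle\cdot,\cdot\rangle/2,\pi_1/1,\pi_2/1,\mathsf{sign}/2,\mathsf{check}/3,\mathsf{retrieve}/1\}$, constants, names and variables; destructors are $\pi_1,\pi_2,\mathsf{dec},\mathsf{deca},\mathsf{check},\mathsf{retrieve}$. Equational theory $E$: $\pi_i(\langle z_1,z_2\rangle)=z_i$, $\mathsf{dec}(\mathsf{enc}(z_1,z_2,z_3),z_2)=z_1$, $\mathsf{deca}(\mathsf{enca}(z_1,\mathsf{pub}(z_2),z_3),\mathsf{priv}(z_2))=z_1$, $\mathsf{check}(z_1,\mathsf{sign}(z_1,\mathsf{priv}(z_2)),\mathsf{pub}(z_2))=\mathsf{ok}$, $\mathsf{retrieve}(\mathsf{sign}(z_1,z_2))=z_1$. Positions are sequences of positive integers ordered by prefix $\le$, $T|_p$ the subterm at $p$. A frame $\varphi=\nu\tilde n.\sigma$: finite set of restricted names and acyclic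 substitution. $\varphi\vdash M$: least relation containing $x\sigma$ ($x\in\mathrm{dom}(\sigma)$) and names outside $\tilde n$, closed under application of any symbol other than $\mathsf{priv}$ and under $=_E$. An encryption occurrence $q$ in $U$ (head of $U|_q$ in $\{\mathsf{enc},\mathsf{enca}\}$) is an agent encryption w.r.t. names $\tilde m$ if $U|_{q\cdot3}\in\tilde m$, and a probabilistic encryption w.r.t. a set of terms $S$ if for all $V\in S$ and $p$ with $V|_p=U|_{q\cdot3}$, $p=q'\cdot3$ with $V|_{q'}=U|_q$. $\varphi$ is well-formed w.r.t. $\mathtt{s}$ if (1) every encryption in $\sigma$ is an agent encryption w.r.t. $\tilde n\setminus\{\mathtt{s}\}$ and a probabilistic encryption w.r.t. $\mathrm{ran}(\sigma)$; (2) for all subterms $\mathsf{enc}(M,K,R)$, $\mathsf{enca}(M',K',R')$, $\mathsf{sign}(U,V)$, $\mathsf{pub}(W)$, $\mathsf{priv}(W')$ of $\varphi$, $\mathtt{s}$ does not occur in $K,K',V,W,W',R,R'$; (3) $\varphi$ contains no destructor. *)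

theory Defs
  imports Main
begin

datatype sym = Enc | Dec | Enca | Deca | Pub | Priv | Pair | Pi1 | Pi2
  | Sign | Check | Retrieve | Cst string

fun arity :: "sym \<Rightarrow> nat" where
  "arity Enc = 3" | "arity Dec = 2" | "arity Enca = 3" | "arity Deca = 2"
| "arity Pub = 1" | "arity Priv = 1" | "arity Pair = 2" | "arity Pi1 = 1"
| "arity Pi2 = 1" | "arity Sign = 2" | "arity Check = 3" | "arity Retrieve = 1"
| "arity (Cst c) = 0"

definition destructors :: "sym set" where
  "destructors = {Pi1, Pi2, Dec, Deca, Check, Retrieve}"

datatype trm = Var string | Nm string | Fn sym "trm list"

fun wf_trm :: "trm \<Rightarrow> bool" where
  "wf_trm (Var x) = True"
| "wf_trm (Nm n) = True"
| "wf_trm (Fn f ts) = (length ts = arity f \<and> (\<forall>t\<in>set ts. wf_trm t))"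

definition ok :: trm where "ok = Fn (Cst ''ok'') []"

type_synonym pos = "nat list"

text \<open>Subterm at a position (positions are sequences of positive integers;
  argument i of a symbol is position i, starting at 1).\<close>
fun subt :: "trm \<Rightarrow> pos \<Rightarrow> trm option" where
  "subt t [] = Some t"
| "subt (Fn f ts) (i # p) =
     (if 1 \<le> i \<and> i \<le> length ts then subt (ts ! (i - 1)) p else None)"
| "subt _ (i # p) = None"

definition subterms :: "trm \<Rightarrow> trm set" where
  "subterms t = {u. \<exists>p. subt t p = Some u}"

fun head :: "trm \<Rightarrow> sym option" where
  "head (Fn f ts) = Some f"
| "head _ = None"

definition strict_prefix_pos :: "pos \<Rightarrow> pos \<Rightarrow> bool" where
  "strict_prefix_pos p q \<longleftrightarrow> (\<exists>r. r \<noteq> [] \<and> q = p @ r)"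

definition prefix_pos :: "pos \<Rightarrow> pos \<Rightarrow> bool" where
  "prefix_pos p q \<longleftrightarrow> (\<exists>r. q = p @ r)"

fun vars :: "trm \<Rightarrow> string set" where
  "vars (Var x) = {x}"
| "vars (Nm n) = {}"
| "vars (Fn f ts) = (\<Union>t\<in>set ts. vars t)"

fun syms :: "trm \<Rightarrow> sym set" where
  "syms (Var x) = {}"
| "syms (Nm n) = {}"
| "syms (Fn f ts) = insert f (\<Union>t\<in>set ts. syms t)"

fun names :: "trm \<Rightarrow> string set" where
  "names (Var x) = {}"
| "names (Nm n) = {n}"
| "names (Fn f ts) = (\<Union>t\<in>set ts. names t)"

inductive eqE :: "trm \<Rightarrow> trm \<Rightarrow> bool" where
  refl: "eqE t t"
| sym: "eqE t u \<Longrightarrow> eqE u t"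
| trans: "eqE t u \<Longrightarrow> eqE u v \<Longrightarrow> eqE t v"
| cong: "list_all2 eqE ts us \<Longrightarrow> eqE (Fn f ts) (Fn f us)"
| pi1: "eqE (Fn Pi1 [Fn Pair [z1, z2]]) z1"
| pi2: "eqE (Fn Pi2 [Fn Pair [z1, z2]]) z2"
| dec: "eqE (Fn Dec [Fn Enc [z1, z2, z3], z2]) z1"
| deca: "eqE (Fn Deca [Fn Enca [z1, Fn Pub [z2], z3], Fn Priv [z2]]) z1"
| check: "eqE (Fn Check [z1, Fn Sign [z1, Fn Priv [z2]], Fn Pub [z2]]) ok"
| retrieve: "eqE (Fn Retrieve [Fn Sign [z1, z2]]) z1"

text \<open>A frame \<open>\<nu>\<tilde>n.\<sigma>\<close>: a set of restricted names and a substitution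
  given as a partial map from variables to terms.\<close>
record frame =
  restr :: "string set"
  subst :: "string \<Rightarrow> trm option"

fun app1 :: "(string \<Rightarrow> trm option) \<Rightarrow> trm \<Rightarrow> trm" where
  "app1 \<sigma> (Var x) = (case \<sigma> x of Some t \<Rightarrow> t | None \<Rightarrow> Var x)"
| "app1 \<sigma> (Nm n) = Nm n"
| "app1 \<sigma> (Fn f ts) = Fn f (map (app1 \<sigma>) ts)"

definition dep :: "(string \<Rightarrow> trm option) \<Rightarrow> (string \<times> string) set" where
  "dep \<sigma> = {(x, y). \<exists>t. \<sigma> y = Some t \<and> x \<in> vars t}"

definition valid_frame :: "frame \<Rightarrow> bool" where
  "valid_frame \<phi> \<longleftrightarrow> finite (restr \<phi>) \<and> finite (dom (subst \<phi>))
     \<and> acyclic (dep (subst \<phi>))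
     \<and> (\<forall>t\<in>ran (subst \<phi>). wf_trm t)"

text \<open>Application of an acyclic substitution (iterated until it stabilises;
  \<open>card (dom \<sigma>)\<close> rounds suffice for an acyclic substitution).\<close>
definition apply_frame :: "frame \<Rightarrow> trm \<Rightarrow> trm" where
  "apply_frame \<phi> t = (app1 (subst \<phi>) ^^ card (dom (subst \<phi>))) t"

inductive ded :: "frame \<Rightarrow> trm \<Rightarrow> bool" where
  ded_var: "x \<in> dom (subst \<phi>) \<Longrightarrow> ded \<phi> (apply_frame \<phi> (Var x))"
| ded_name: "n \<notin> restr \<phi> \<Longrightarrow> ded \<phi> (Nm n)"
| ded_fun: "f \<noteq> Priv \<Longrightarrow> length ts = arity f \<Longrightarrow> (\<forall>t\<in>set ts. ded \<phi> t)
             \<Longrightarrow> ded \<phi> (Fn f ts)"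
| ded_eq: "ded \<phi> M \<Longrightarrow> eqE M N \<Longrightarrow> ded \<phi> N"

definition enc_occ :: "trm \<Rightarrow> pos \<Rightarrow> bool" where
  "enc_occ U q \<longleftrightarrow> (\<exists>u. subt U q = Some u \<and> head u \<in> {Some Enc, Some Enca})"

definition agent_enc :: "string set \<Rightarrow> trm \<Rightarrow> pos \<Rightarrow> bool" where
  "agent_enc m U q \<longleftrightarrow> (\<exists>n\<in>m. subt U (q @ [3]) = Some (Nm n))"

definition prob_enc :: "trm set \<Rightarrow> trm \<Rightarrow> pos \<Rightarrow> bool" where
  "prob_enc S U q \<longleftrightarrow> (\<forall>V\<in>S. \<forall>p. subt V p = subt U (q @ [3]) \<longrightarrow>
       (\<exists>q'. p = q' @ [3] \<and> subt V q' = subt U q))"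

definition frame_subterms :: "frame \<Rightarrow> trm set" where
  "frame_subterms \<phi> = (\<Union>t\<in>ran (subst \<phi>). subterms t)"

definition well_formed :: "frame \<Rightarrow> string \<Rightarrow> bool" where
  "well_formed \<phi> s \<longleftrightarrow>
     (\<forall>U\<in>ran (subst \<phi>). \<forall>q. enc_occ U q \<longrightarrow>
         agent_enc (restr \<phi> - {s}) U q \<and> prob_enc (ran (subst \<phi>)) U q)
   \<and> (\<forall>u\<in>frame_subterms \<phi>.
         (\<forall>M K R. u = Fn Enc [M, K, R] \<longrightarrow> s \<notin> names K \<and> s \<notin> names R)
       \<and> (\<forall>M K R. u = Fn Enca [M, K, R] \<longrightarrow> s \<notin> names K \<and> s \<notin> names R)
       \<and> (\<forall>U V. u = Fn Sign [U, V] \<longrightarrow> s \<notin> names V)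
       \<and> (\<forall>W. u = Fn Pub [W] \<longrightarrow> s \<notin> names W)
       \<and> (\<forall>W. u = Fn Priv [W] \<longrightarrow> s \<notin> names W))
   \<and> (\<forall>t\<in>ran (subst \<phi>). syms t \<inter> destructors = {})"

end

theory Submission
  imports Defs
begin

lemma subt_app: "subt t (p @ q) = (case subt t p of Some u \<Rightarrow> subt u q | None \<Rightarrow> None)"
  by (induction t p rule: subt.induct) auto

lemma app1_subt: "subt r P = Some u \<Longrightarrow> subt (app1 \<sigma> r) P = Some (app1 \<sigma> u)"
  by (induction r P arbitrary: u rule: subt.induct) (auto split: if_splits)

lemma funpow_subt: "subt r P = Some u \<Longrightarrow> subt ((app1 \<sigma> ^^ j) r) P = Some ((app1 \<sigma> ^^ j) u)"
  by (induction j) (auto intro: app1_subt)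

lemma funpow_Fn: "(app1 \<sigma> ^^ j) (Fn f ts) = Fn f (map (app1 \<sigma> ^^ j) ts)"
  by (induction j) auto

lemma funpow_Nm: "(app1 \<sigma> ^^ j) (Nm n) = Nm n"
  by (induction j) auto

lemma subt_Nm: "subt (Nm n) p = Some u \<Longrightarrow> p = [] \<and> u = Nm n"
  by (cases p) auto

lemma subt_Var: "subt (Var n) p = Some u \<Longrightarrow> p = [] \<and> u = Var n"
  by (cases p) auto

lemma app1_subt_Nm:
  "subt (app1 \<sigma> t) P = Some (Nm n) \<Longrightarrow> subt t P = Some (Nm n) \<or>
    (\<exists>P1 P2 x u. P = P1 @ P2 \<and> subt t P1 = Some (Var x) \<and> \<sigma> x = Some u \<and> subt u P2 = Some (Nm n))"
proof (induction t arbitrary: P)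
  case (Var x)
  show ?case
  proof (cases "\<sigma> x")
    case None then show ?thesis using Var by (auto dest: subt_Var)
  next
    case (Some u)
    then have "P = [] @ P \<and> subt (Var x) [] = Some (Var x) \<and> \<sigma> x = Some u \<and> subt u P = Some (Nm n)"
      using Var by simp
    then show ?thesis by blast
  qed
next
  case (Nm m) then show ?case by simp
next
  case (Fn f ts)
  show ?case
  proof (cases P)
    case Nil then show ?thesis using Fn by simp
  next
    case (Cons i P')
    with Fn.prems have i: "1 \<le> i" "i \<le> length ts"
      and c: "subt (app1 \<sigma> (ts ! (i - 1))) P' = Some (Nm n)"
      by (auto split: if_splits)
    have mem: "ts ! (i - 1) \<in> set ts" using i by auto
    from Fn.IH[OF mem c] show ?thesis
    proof
      assume "subt (ts ! (i - 1)) P' = Some (Nm n)"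
      then show ?thesis using Cons i by auto
    next
      assume "\<exists>P1 P2 x u. P' = P1 @ P2 \<and> subt (ts ! (i - 1)) P1 = Some (Var x) \<and> \<sigma> x = Some u \<and> subt u P2 = Some (Nm n)"
      then obtain P1 P2 x u where "P' = P1 @ P2" "subt (ts ! (i - 1)) P1 = Some (Var x)" "\<sigma> x = Some u" "subt u P2 = Some (Nm n)"
        by blast
      then have "P = (i # P1) @ P2 \<and> subt (Fn f ts) (i # P1) = Some (Var x) \<and> \<sigma> x = Some u \<and> subt u P2 = Some (Nm n)"
        using Cons i by simp
      then show ?thesis by blast
    qed
  qed
qed

lemma decomp:
  "subt ((app1 \<sigma> ^^ k) t) p = Some (Nm n) \<Longrightarrow>
   \<exists>p1 P r j. p = p1 @ P \<and> subt ((app1 \<sigma> ^^ k) t) p1 = Some ((app1 \<sigma> ^^ j) r)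
      \<and> subt r P = Some (Nm n) \<and> (r = t \<or> r \<in> ran \<sigma>)"
proof (induction k arbitrary: t p)
  case 0
  then show ?case by (intro exI[of _ "[]"] exI[of _ p] exI[of _ t] exI[of _ 0]) auto
next
  case (Suc k)
  have eq: "(app1 \<sigma> ^^ Suc k) t = (app1 \<sigma> ^^ k) (app1 \<sigma> t)"
    by (simp add: funpow_Suc_right del: funpow.simps)
  from Suc.prems Suc.IH[of "app1 \<sigma> t" p] obtain p1 P r j where
    h: "p = p1 @ P" "subt ((app1 \<sigma> ^^ k) (app1 \<sigma> t)) p1 = Some ((app1 \<sigma> ^^ j) r)"
       "subt r P = Some (Nm n)" "r = app1 \<sigma> t \<or> r \<in> ran \<sigma>"
    unfolding eq by blast
  show ?case
  proof (cases "r \<in> ran \<sigma>")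
    case True then show ?thesis using h eq by metis
  next
    case False
    then have r: "r = app1 \<sigma> t" using h by blast
    have s1: "subt ((app1 \<sigma> ^^ Suc k) t) p1 = Some ((app1 \<sigma> ^^ Suc j) t)"
      using h(2) r eq by (simp add: funpow_Suc_right del: funpow.simps)
    have "subt (app1 \<sigma> t) P = Some (Nm n)" using h(3) r by simp
    then have "subt t P = Some (Nm n) \<or>
      (\<exists>P1 P2 x u. P = P1 @ P2 \<and> subt t P1 = Some (Var x) \<and> \<sigma> x = Some u \<and> subt u P2 = Some (Nm n))"
      by (rule app1_subt_Nm)
    then show ?thesis
    proof
      assume "subt t P = Some (Nm n)"
      then show ?thesis using s1 h(1) by blast
    next
      assume "\<exists>P1 P2 x u. P = P1 @ P2 \<and> subt t P1 = Some (Var x) \<and> \<sigma> x = Some u \<and> subt u P2 = Some (Nm n)"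
      then obtain P1 P2 x u where a: "P = P1 @ P2" "subt t P1 = Some (Var x)" "\<sigma> x = Some u" "subt u P2 = Some (Nm n)"
        by blast
      have "subt ((app1 \<sigma> ^^ Suc j) t) P1 = Some ((app1 \<sigma> ^^ Suc j) (Var x))"
        using funpow_subt[OF a(2)] .
      also have "(app1 \<sigma> ^^ Suc j) (Var x) = (app1 \<sigma> ^^ j) u"
        using a(3) by (simp add: funpow_Suc_right del: funpow.simps)
      finally have "subt ((app1 \<sigma> ^^ Suc k) t) (p1 @ P1) = Some ((app1 \<sigma> ^^ j) u)"
        using s1 by (simp add: subt_app)
      moreover have "u \<in> ran \<sigma>" using a(3) by (auto simp: ran_def)
      ultimately show ?thesis using a h(1) by (intro exI[of _ "p1 @ P1"] exI[of _ P2] exI[of _ u] exI[of _ j]) auto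
    qed
  qed
qed

lemma subt_syms: "subt t p = Some u \<Longrightarrow> syms u \<subseteq> syms t"
  by (induction t p rule: subt.induct) (force split: if_splits)+

lemma subt_wf: "subt t p = Some u \<Longrightarrow> wf_trm t \<Longrightarrow> wf_trm u"
  by (induction t p rule: subt.induct) (auto split: if_splits)

lemma subt_names: "subt t p = Some (Nm n) \<Longrightarrow> n \<in> names t"
  by (induction t p rule: subt.induct) (force split: if_splits)+

lemma wf_conds: "well_formed \<phi> s \<Longrightarrow> u \<in> frame_subterms \<phi> \<Longrightarrow>
     (\<forall>M K R. u = Fn Enc [M, K, R] \<longrightarrow> s \<notin> names K \<and> s \<notin> names R)
       \<and> (\<forall>M K R. u = Fn Enca [M, K, R] \<longrightarrow> s \<notin> names K \<and> s \<notin> names R)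
       \<and> (\<forall>U V. u = Fn Sign [U, V] \<longrightarrow> s \<notin> names V)
       \<and> (\<forall>W. u = Fn Pub [W] \<longrightarrow> s \<notin> names W)
       \<and> (\<forall>W. u = Fn Priv [W] \<longrightarrow> s \<notin> names W)"
  unfolding well_formed_def by (elim conjE) (erule bspec)
lemma wf_syms: "well_formed \<phi> s \<Longrightarrow> t \<in> ran (subst \<phi>) \<Longrightarrow> syms t \<inter> destructors = {}"
  unfolding well_formed_def by (elim conjE) (erule bspec)

lemma walk:
  assumes wf: "well_formed \<phi> s" and vf: "valid_frame \<phi>" and nd: "\<not> ded \<phi> (Nm s)"
  shows "u \<in> frame_subterms \<phi> \<Longrightarrow> ded \<phi> ((app1 (subst \<phi>) ^^ j) u) \<Longrightarrow> subt u P = Some (Nm s) \<Longrightarrow>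
    \<exists>P' w. strict_prefix_pos P' P \<and> subt u P' = Some w \<and> head w \<in> {Some Enc, Some Enca}
      \<and> prefix_pos (P' @ [1]) P"
proof (induction P arbitrary: u)
  case Nil
  then show ?case using nd by (simp add: funpow_Nm)
next
  case (Cons i P)
  then obtain f ts where u: "u = Fn f ts" by (cases u) auto
  from Cons.prems(3) u have i: "1 \<le> i" "i \<le> length ts"
    and c: "subt (ts ! (i - 1)) P = Some (Nm s)" by (auto split: if_splits)
  from Cons.prems(1) obtain t p where t: "t \<in> ran (subst \<phi>)" "subt t p = Some u"
    unfolding frame_subterms_def subterms_def by blast
  have child: "ts ! (i - 1) \<in> frame_subterms \<phi>"
    using t i u unfolding frame_subterms_def subterms_def
    by (intro UN_I[OF t(1)]) (auto intro!: exI[of _ "p @ [i]"] simp: subt_app)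
  have wfu: "wf_trm u" using vf t unfolding valid_frame_def by (auto intro: subt_wf)
  have nodes: "f \<notin> destructors" using wf_syms[OF wf t(1)] subt_syms[OF t(2)] u by auto
  have conds: "\<forall>M K R. u = Fn Enc [M, K, R] \<longrightarrow> s \<notin> names K \<and> s \<notin> names R"
     "\<forall>M K R. u = Fn Enca [M, K, R] \<longrightarrow> s \<notin> names K \<and> s \<notin> names R"
     "\<forall>U V. u = Fn Sign [U, V] \<longrightarrow> s \<notin> names V"
     "\<forall>W. u = Fn Pub [W] \<longrightarrow> s \<notin> names W"
     "\<forall>W. u = Fn Priv [W] \<longrightarrow> s \<notin> names W"
    using wf_conds[OF wf Cons.prems(1)] by blast+
  have sn: "s \<in> names (ts ! (i - 1))" using subt_names[OF c] .
  have lift: "ded \<phi> ((app1 (subst \<phi>) ^^ j) (ts ! (i - 1))) \<Longrightarrow> ?case"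
  proof -
    assume d: "ded \<phi> ((app1 (subst \<phi>) ^^ j) (ts ! (i - 1)))"
    from Cons.IH[OF child d c] obtain P' w where
      "strict_prefix_pos P' P" "subt (ts ! (i - 1)) P' = Some w" "head w \<in> {Some Enc, Some Enca}"
      "prefix_pos (P' @ [1]) P" by blast
    then show ?case using u i
      by (intro exI[of _ "i # P'"] exI[of _ w]) (auto simp: strict_prefix_pos_def prefix_pos_def)
  qed
  have du: "ded \<phi> (Fn f (map (app1 (subst \<phi>) ^^ j) ts))"
    using Cons.prems(2) u by (simp add: funpow_Fn)
  show ?case
  proof (cases f)
    case Enc
    with wfu u obtain M K R where ts: "ts = [M, K, R]"
      by (auto simp: numeral_eq_Suc length_Suc_conv)
    consider "i = 1" | "i = 2" | "i = 3" using i ts by force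
    then show ?thesis
    proof cases
      case 1 then show ?thesis using u Enc
        by (intro exI[of _ "[]"] exI[of _ u]) (auto simp: strict_prefix_pos_def prefix_pos_def)
    qed (use conds sn ts u Enc in auto)
  next
    case Enca
    with wfu u obtain M K R where ts: "ts = [M, K, R]"
      by (auto simp: numeral_eq_Suc length_Suc_conv)
    consider "i = 1" | "i = 2" | "i = 3" using i ts by force
    then show ?thesis
    proof cases
      case 1 then show ?thesis using u Enca
        by (intro exI[of _ "[]"] exI[of _ u]) (auto simp: strict_prefix_pos_def prefix_pos_def)
    qed (use conds sn ts u Enca in auto)
  next
    case Pub
    with wfu u obtain W where ts: "ts = [W]" by (auto simp: length_Suc_conv)
    then show ?thesis using conds sn u Pub i by auto
  next
    case Priv
    with wfu u obtain W where ts: "ts = [W]" by (auto simp: length_Suc_conv)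
    then show ?thesis using conds sn u Priv i by auto
  next
    case Sign
    with wfu u obtain U V where ts: "ts = [U, V]" by (auto simp: numeral_eq_Suc length_Suc_conv)
    consider "i = 1" | "i = 2" using i ts by force
    then show ?thesis
    proof cases
      case 1
      let ?a = "app1 (subst \<phi>) ^^ j"
      have "ded \<phi> (Fn Retrieve [Fn Sign [?a U, ?a V]])"
        using du Sign ts by (intro ded_fun) auto
      then have "ded \<phi> (?a U)" by (rule ded_eq) (rule eqE.retrieve)
      then show ?thesis using 1 ts by (intro lift) simp
    qed (use conds sn ts u Sign in auto)
  next
    case Pair
    with wfu u obtain U V where ts: "ts = [U, V]" by (auto simp: numeral_eq_Suc length_Suc_conv)
    let ?a = "app1 (subst \<phi>) ^^ j"
    consider "i = 1" | "i = 2" using i ts by force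
    then show ?thesis
    proof cases
      case 1
      have "ded \<phi> (Fn Pi1 [Fn Pair [?a U, ?a V]])"
        using du Pair ts by (intro ded_fun) auto
      then have "ded \<phi> (?a U)" by (rule ded_eq) (rule eqE.pi1)
      then show ?thesis using 1 ts by (intro lift) simp
    next
      case 2
      have "ded \<phi> (Fn Pi2 [Fn Pair [?a U, ?a V]])"
        using du Pair ts by (intro ded_fun) auto
      then have "ded \<phi> (?a V)" by (rule ded_eq) (rule eqE.pi2)
      then show ?thesis using 2 ts by (intro lift) simp
    qed
  next
    case (Cst c)
    then show ?thesis using wfu u i by simp
  qed (use nodes in \<open>auto simp: destructors_def\<close>)
qed

lemma head_funpow: "head w \<in> {Some Enc, Some Enca} \<Longrightarrow> head ((app1 \<sigma> ^^ j) w) = head w"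
  by (cases w) (auto simp: funpow_Fn)

theorem lemma2p11:
  fixes \<phi> :: frame and s y :: string and qs :: pos
  assumes "valid_frame \<phi>"
    and "well_formed \<phi> s"
    and "s \<in> restr \<phi>"
    and "y \<in> dom (subst \<phi>)"
    and "subt (apply_frame \<phi> (Var y)) qs = Some (Nm s)"
    and "\<not> ded \<phi> (Nm s)"
  shows "\<exists>q. strict_prefix_pos q qs
           \<and> head (the (subt (apply_frame \<phi> (Var y)) q)) \<in> {Some Enc, Some Enca}
           \<and> prefix_pos (q @ [1]) qs"
proof -
  let ?\<sigma> = "subst \<phi>"
  let ?N = "card (dom ?\<sigma>)"
  from decomp[where \<sigma>="?\<sigma>" and k="?N" and t="Var y" and p=qs and n=s] assms(5) obtain p1 P r j where
    h: "qs = p1 @ P" "subt (apply_frame \<phi> (Var y)) p1 = Some ((app1 ?\<sigma> ^^ j) r)"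
       "subt r P = Some (Nm s)" "r = Var y \<or> r \<in> ran ?\<sigma>"
    unfolding apply_frame_def by blast
  have "r \<in> ran ?\<sigma>" using h(3,4) by (auto dest: subt_Var)
  then obtain z where z: "?\<sigma> z = Some r" by (auto simp: ran_def)
  have "finite (dom ?\<sigma>)" using assms(1) by (simp add: valid_frame_def)
  then have N: "?N \<ge> 1" using z by (metis One_nat_def Suc_leI card_gt_0_iff domI empty_iff)
  have "ded \<phi> (apply_frame \<phi> (Var z))" using z by (intro ded_var) auto
  moreover have "apply_frame \<phi> (Var z) = (app1 ?\<sigma> ^^ (?N - 1)) r"
  proof -
    have "?N = Suc (?N - 1)" using N by simp
    then have "apply_frame \<phi> (Var z) = (app1 ?\<sigma> ^^ Suc (?N - 1)) (Var z)"
      unfolding apply_frame_def by metis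
    also have "\<dots> = (app1 ?\<sigma> ^^ (?N - 1)) r" using z
      by (simp add: funpow_Suc_right del: funpow.simps)
    finally show ?thesis .
  qed
  ultimately have d: "ded \<phi> ((app1 ?\<sigma> ^^ (?N - 1)) r)" by simp
  have rf: "r \<in> frame_subterms \<phi>" using \<open>r \<in> ran ?\<sigma>\<close>
    unfolding frame_subterms_def subterms_def by (auto intro!: exI[of _ "[]"])
  from walk[OF assms(2) assms(1) assms(6) rf d h(3)] obtain P' w where
    w: "strict_prefix_pos P' P" "subt r P' = Some w" "head w \<in> {Some Enc, Some Enca}"
       "prefix_pos (P' @ [1]) P" by blast
  have "subt (apply_frame \<phi> (Var y)) (p1 @ P') = Some ((app1 ?\<sigma> ^^ j) w)"
    using h(2) funpow_subt[OF w(2)] by (simp add: subt_app)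
  then show ?thesis using w h(1) head_funpow[OF w(3)]
    by (intro exI[of _ "p1 @ P'"]) (auto simp: strict_prefix_pos_def prefix_pos_def)
qed

end
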